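(* There is an absolute constant $C>0$ such that the following holds. Let $n\ge 1$, $r\ge 1$, $\delta>0$ with $\delta n\ge 1$, and $\hat\epsilon>0$. Let $P_\tau$ be a set of $n_\tau\le n$ points in $\mathbb{R}^2$ in general position, partitioned into classes ("cells") each of size at most $n/r^2$; for $p\in P_\tau$ let $P_{\mu(p)}$ be the class of $p$. For each $p\in P_\tau$, list the $n_\tau-1$ other points of $P_\tau$ in clockwise angular order around $p$ and split this list into consecutive blocks ${\cal E}_0,\dots,{\cal E}_{z-1}$, each but the last containing exactly $\lceil 2\delta n\rceil$ points and the last containing at most $\lceil 2\delta n\rceil$ points. If $z\ge 3$, define the $z$ sectors ${\cal W}_j(p)={\cal E}_j\cup{\cal E}_{j+1}\cup{\cal E}_{j+2}$ (indices modulo $z$), $0\le j\le z-1$; if $z<3$, define a single sector ${\cal W}_0(p)=P_\tau\setminus\{p\}$. Call a sector ${\cal W}_j(p)$ rich if it contains at least $\hat\epsilon n/10$ points of $P_{\mu(p)}\setminus\{p\}$. Let $\Pi$ be the set of pairs $\{p,q\}\subseteq P_\tau$ such that $q$ lies in a rich sector of $p$ or $p$ lies in a rich sector of $q$. Then $$|\Pi|\le C\,\frac{\delta n^2}{r^2\hat\epsilon}.$$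
   Context: General position: no three points collinear and no two on a common vertical line. *)

theory Defs
  imports "HOL-Analysis.Analysis"
begin

type_synonym pt = "real \<times> real"

definition general_position :: "pt set \<Rightarrow> bool" where
  "general_position P \<longleftrightarrow>
     (\<forall>a\<in>P. \<forall>b\<in>P. \<forall>c\<in>P. a \<noteq> b \<and> b \<noteq> c \<and> a \<noteq> c \<longrightarrow> \<not> collinear {a, b, c}) \<and>
     (\<forall>a\<in>P. \<forall>b\<in>P. a \<noteq> b \<longrightarrow> fst a \<noteq> fst b)"

definition dir_angle :: "pt \<Rightarrow> pt \<Rightarrow> real" where
  "dir_angle p q = Arg (Complex (fst q - fst p) (snd q - snd p))"

text \<open>Clockwise angle, in [0, 2 pi), swept from the starting ray of angle th0 to the direction p->q.\<close>
definition cw_angle :: "real \<Rightarrow> pt \<Rightarrow> pt \<Rightarrow> real" where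
  "cw_angle th0 p q = 2 * pi * frac ((th0 - dir_angle p q) / (2 * pi))"

definition clockwise_list :: "pt set \<Rightarrow> pt \<Rightarrow> pt list \<Rightarrow> bool" where
  "clockwise_list P p L \<longleftrightarrow> distinct L \<and> set L = P - {p} \<and>
     (\<exists>th0. sorted_wrt (\<lambda>a b. cw_angle th0 p a < cw_angle th0 p b) L)"

definition blk :: "real \<Rightarrow> nat \<Rightarrow> nat" where
  "blk \<delta> n = nat \<lceil>2 * \<delta> * real n\<rceil>"

definition nblocks :: "nat \<Rightarrow> nat \<Rightarrow> nat" where
  "nblocks k m = (m + k - 1) div k"

definition block :: "nat \<Rightarrow> pt list \<Rightarrow> nat \<Rightarrow> pt set" where
  "block k L j = {L ! i | i. i < length L \<and> j * k \<le> i \<and> i < (j + 1) * k}"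

definition sector :: "pt set \<Rightarrow> pt \<Rightarrow> nat \<Rightarrow> pt list \<Rightarrow> nat \<Rightarrow> pt set" where
  "sector P p k L j =
     (let z = nblocks k (length L) in
      if 3 \<le> z then block k L j \<union> block k L ((j + 1) mod z) \<union> block k L ((j + 2) mod z)
      else P - {p})"

definition sector_indices :: "nat \<Rightarrow> pt list \<Rightarrow> nat set" where
  "sector_indices k L = (let z = nblocks k (length L) in if 3 \<le> z then {..<z} else {0})"

definition cell :: "pt set \<Rightarrow> (pt \<Rightarrow> 'c) \<Rightarrow> pt \<Rightarrow> pt set" where
  "cell P \<mu> p = {q \<in> P. \<mu> q = \<mu> p}"

definition rich_sector :: "pt set \<Rightarrow> (pt \<Rightarrow> 'c) \<Rightarrow> nat \<Rightarrow> real \<Rightarrow> pt \<Rightarrow> pt set \<Rightarrow> bool" where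
  "rich_sector P \<mu> n \<epsilon> p W \<longleftrightarrow> real (card (W \<inter> (cell P \<mu> p - {p}))) \<ge> \<epsilon> * real n / 10"

definition in_rich_sector :: "pt set \<Rightarrow> (pt \<Rightarrow> 'c) \<Rightarrow> nat \<Rightarrow> real \<Rightarrow> real \<Rightarrow> (pt \<Rightarrow> pt list) \<Rightarrow> pt \<Rightarrow> pt \<Rightarrow> bool" where
  "in_rich_sector P \<mu> n \<delta> \<epsilon> L p q \<longleftrightarrow>
     (\<exists>j \<in> sector_indices (blk \<delta> n) (L p).
        rich_sector P \<mu> n \<epsilon> p (sector P p (blk \<delta> n) (L p) j) \<and> q \<in> sector P p (blk \<delta> n) (L p) j)"

definition Pi_pairs :: "pt set \<Rightarrow> (pt \<Rightarrow> 'c) \<Rightarrow> nat \<Rightarrow> real \<Rightarrow> real \<Rightarrow> (pt \<Rightarrow> pt list) \<Rightarrow> pt set set" where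
  "Pi_pairs P \<mu> n \<delta> \<epsilon> L = {{p, q} | p q. p \<in> P \<and> q \<in> P \<and> p \<noteq> q \<and>
      (in_rich_sector P \<mu> n \<delta> \<epsilon> L p q \<or> in_rich_sector P \<mu> n \<delta> \<epsilon> L q p)}"

end

theory Submission
  imports Defs
begin

lemma modcancel: assumes "(a + c) mod z = (b + c) mod (z::nat)" "a < z" "b < z" shows "a = b"
proof -
  have "(int a + int c) mod int z = (int b + int c) mod int z"
    using assms(1) by (metis of_nat_add of_nat_mod)
  hence "(int a + int c - int c) mod int z = (int b + int c - int c) mod int z"
    by (metis mod_diff_left_eq)
  hence "int a mod int z = int b mod int z" by simp
  thus ?thesis using assms(2,3) by (metis mod_less of_nat_mod of_nat_eq_iff)
qed

lemma block_sub: "block k L j \<subseteq> set L"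
  unfolding block_def by auto

lemma card_block: "card (block k L j) \<le> k"
proof -
  have "block k L j \<subseteq> (\<lambda>i. L ! i) ` {j*k..<(j+1)*k}"
    unfolding block_def by auto
  hence "card (block k L j) \<le> card {j*k..<(j+1)*k}"
    using card_mono[OF finite_imageI[OF finite_atLeastLessThan]] card_image_le[OF finite_atLeastLessThan]
    by (meson le_trans)
  thus ?thesis by simp
qed

lemma block_unique:
  assumes "distinct L" "x \<in> block k L a" "x \<in> block k L b"
  shows "a = b"
proof -
  obtain i where i: "x = L ! i" "i < length L" "a * k \<le> i" "i < (a+1)*k"
    using assms(2) unfolding block_def by auto
  obtain i' where i': "x = L ! i'" "i' < length L" "b * k \<le> i'" "i' < (b+1)*k"
    using assms(3) unfolding block_def by auto
  have "i = i'" using i i' assms(1) nth_eq_iff_index_eq by metis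
  have "i div k = a" using i by (intro div_nat_eqI) (simp_all add: mult.commute)
  moreover have "i div k = b" using i' \<open>i = i'\<close> by (intro div_nat_eqI) (simp_all add: mult.commute)
  ultimately show ?thesis by simp
qed

lemma shift_count:
  assumes "distinct L"
  shows "card {j\<in>{..<z}. x \<in> block k L ((j + c) mod z)} \<le> 1"
proof -
  have "\<forall>a\<in>{j\<in>{..<z}. x \<in> block k L ((j + c) mod z)}. \<forall>b\<in>{j\<in>{..<z}. x \<in> block k L ((j + c) mod z)}. a = b"
  proof (intro ballI)
    fix a b assume a: "a \<in> {j\<in>{..<z}. x \<in> block k L ((j + c) mod z)}"
      and b: "b \<in> {j\<in>{..<z}. x \<in> block k L ((j + c) mod z)}"
    have "(a + c) mod z = (b + c) mod z" using a b block_unique[OF assms, of x k "(a+c) mod z" "(b+c) mod z"] by auto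
    thus "a = b" using a b by (intro modcancel[of a c z b]) auto
  qed
  thus ?thesis by (simp add: card_le_Suc0_iff_eq)
qed

lemma sector_count:
  assumes "distinct L"
  shows "card {j\<in>sector_indices k L. x \<in> sector P p k L j} \<le> 3"
proof (cases "3 \<le> nblocks k (length L)")
  case True
  define z where "z = nblocks k (length L)"
  have "{j\<in>sector_indices k L. x \<in> sector P p k L j} \<subseteq>
     {j\<in>{..<z}. x \<in> block k L ((j + 0) mod z)} \<union> {j\<in>{..<z}. x \<in> block k L ((j + 1) mod z)}
      \<union> {j\<in>{..<z}. x \<in> block k L ((j + 2) mod z)}"
    using True unfolding sector_indices_def sector_def z_def[symmetric] Let_def by auto
  hence "card {j\<in>sector_indices k L. x \<in> sector P p k L j} \<le> card ({j\<in>{..<z}. x \<in> block k L ((j + 0) mod z)} \<union> {j\<in>{..<z}. x \<in> block k L ((j + 1) mod z)}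
      \<union> {j\<in>{..<z}. x \<in> block k L ((j + 2) mod z)})"
    by (intro card_mono) auto
  also have "\<dots> \<le> card {j\<in>{..<z}. x \<in> block k L ((j + 0) mod z)} + card {j\<in>{..<z}. x \<in> block k L ((j + 1) mod z)}
      + card {j\<in>{..<z}. x \<in> block k L ((j + 2) mod z)}"
    by (smt (verit) add_le_mono card_Un_le le_refl order_trans)
  also have "\<dots> \<le> 1 + 1 + 1" using shift_count[OF assms] by (meson add_le_mono)
  finally show ?thesis by simp
next
  case False
  hence "sector_indices k L = {0}" unfolding sector_indices_def Let_def by simp
  hence "{j\<in>sector_indices k L. x \<in> sector P p k L j} \<subseteq> {0}" by auto
  hence "card {j\<in>sector_indices k L. x \<in> sector P p k L j} \<le> 1"
    using card_mono[of "{0::nat}"] by fastforce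
  thus ?thesis by simp
qed

lemma card_sector:
  assumes "distinct L" "set L = P - {p}" "k > 0"
  shows "card (sector P p k L j) \<le> 3 * k"
proof (cases "3 \<le> nblocks k (length L)")
  case True
  define z where "z = nblocks k (length L)"
  have "card (sector P p k L j) \<le> card (block k L j) + card (block k L ((j+1) mod z)) + card (block k L ((j+2) mod z))"
    using True card_Un_le[of "block k L j \<union> block k L ((j+1) mod z)" "block k L ((j+2) mod z)"]
       card_Un_le[of "block k L j" "block k L ((j+1) mod z)"]
    unfolding sector_def z_def[symmetric] Let_def by simp
  also have "\<dots> \<le> k + k + k" using card_block by (meson add_le_mono)
  finally show ?thesis by simp
next
  case False
  hence "(length L + k - 1) div k < 3" unfolding nblocks_def by simp
  hence "length L + k - 1 < 3 * k" using assms(3) by (simp add: div_less_iff_less_mult mult.commute)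
  hence "length L \<le> 3 * k" by linarith
  moreover have "sector P p k L j = set L" using False assms(2) unfolding sector_def Let_def by simp
  hence "card (sector P p k L j) = card (set L)" by simp
  with \<open>length L \<le> 3 * k\<close> show ?thesis using card_length[of L] by linarith
qed

lemma swap_count:
  assumes "finite J" "finite C"
  shows "(\<Sum>j\<in>J. card (W j \<inter> C)) = (\<Sum>x\<in>C. card {j\<in>J. x \<in> W j})"
proof -
  have "(\<Sum>j\<in>J. card (W j \<inter> C)) = (\<Sum>j\<in>J. \<Sum>x\<in>C. if x \<in> W j then 1 else 0)"
  proof (rule sum.cong)
    fix j assume "j \<in> J"
    have "W j \<inter> C = {x\<in>C. x \<in> W j}" by auto
    thus "card (W j \<inter> C) = (\<Sum>x\<in>C. if x \<in> W j then 1 else 0)"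
      using sum.inter_filter[OF assms(2), of "\<lambda>_. 1::nat" "\<lambda>x. x \<in> W j"] by simp
  qed simp
  also have "\<dots> = (\<Sum>x\<in>C. \<Sum>j\<in>J. if x \<in> W j then 1 else 0)" by (rule sum.swap)
  also have "\<dots> = (\<Sum>x\<in>C. card {j\<in>J. x \<in> W j})"
    using sum.inter_filter[OF assms(1)] by (intro sum.cong) (simp_all add: sum.inter_filter[OF assms(1), symmetric])
  finally show ?thesis .
qed



lemma sector_sub:
  assumes "set L = P - {p}"
  shows "sector P p k L j \<subseteq> P"
  using assms block_sub[of k L] unfolding sector_def Let_def by auto

lemma finite_indices: "finite (sector_indices k L)"
  unfolding sector_indices_def Let_def by simp

lemma per_point:
  fixes P :: "pt set" and \<mu> :: "pt \<Rightarrow> 'c"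
  assumes fin: "finite P" and dist: "distinct Lp" and setL: "set Lp = P - {p}"
    and kpos: "k > 0" and kle: "real k \<le> 3 * \<delta> * real n" and n1: "n \<ge> 1"
    and epos: "\<epsilon> > 0" and rpos: "r > 0" and cellb: "real (card (cell P \<mu> p)) \<le> real n / r^2"
  shows "real (card {q. \<exists>j\<in>sector_indices k Lp. rich_sector P \<mu> n \<epsilon> p (sector P p k Lp j) \<and> q \<in> sector P p k Lp j})
     \<le> 270 * \<delta> * real n / (r^2 * \<epsilon>)"
proof -
  define J where "J = sector_indices k Lp"
  define W where "W j = sector P p k Lp j" for j
  define C' where "C' = cell P \<mu> p - {p}"
  define R where "R = {j\<in>J. rich_sector P \<mu> n \<epsilon> p (W j)}"
  have finJ: "finite J" unfolding J_def by (rule finite_indices)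
  have finR: "finite R" unfolding R_def using finJ by simp
  have finC: "finite C'" unfolding C'_def cell_def using fin by simp
  have finW: "finite (W j)" for j using sector_sub[OF setL] fin unfolding W_def by (meson finite_subset)
  have eq: "{q. \<exists>j\<in>sector_indices k Lp. rich_sector P \<mu> n \<epsilon> p (sector P p k Lp j) \<and> q \<in> sector P p k Lp j}
      = (\<Union>j\<in>R. W j)" unfolding R_def W_def J_def by auto
  have "card (\<Union>j\<in>R. W j) \<le> (\<Sum>j\<in>R. card (W j))" by (rule card_UN_le[OF finR])
  also have "\<dots> \<le> card R * (3 * k)"
    using sum_bounded_above[of R "\<lambda>j. card (W j)" "3*k"] card_sector[OF dist setL kpos] unfolding W_def
    by simp
  finally have c1: "real (card (\<Union>j\<in>R. W j)) \<le> real (card R) * (3 * real k)"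
    by (metis of_nat_le_iff of_nat_mult of_nat_numeral)
  have "real (card R) * (\<epsilon> * real n / 10) \<le> (\<Sum>j\<in>R. real (card (W j \<inter> C')))"
    using sum_bounded_below[of R "\<epsilon> * real n / 10" "\<lambda>j. real (card (W j \<inter> C'))"]
    unfolding R_def rich_sector_def C'_def by auto
  also have "\<dots> = real (\<Sum>j\<in>R. card (W j \<inter> C'))" by simp
  also have "(\<Sum>j\<in>R. card (W j \<inter> C')) \<le> (\<Sum>j\<in>J. card (W j \<inter> C'))"
    using finJ unfolding R_def by (intro sum_mono2) auto
  also have "\<dots> = (\<Sum>x\<in>C'. card {j\<in>J. x \<in> W j})" by (rule swap_count[OF finJ finC])
  also have "\<dots> \<le> (\<Sum>x\<in>C'. 3)"
    using sector_count[OF dist] unfolding J_def W_def by (intro sum_mono) auto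
  also have "\<dots> = 3 * card C'" by simp
  finally have c2: "real (card R) * (\<epsilon> * real n / 10) \<le> 3 * real (card C')" by simp
  have "card C' \<le> card (cell P \<mu> p)" unfolding C'_def cell_def using fin by (intro card_mono) auto
  hence "real (card C') \<le> real n / r^2" using cellb by linarith
  with c2 have c3: "real (card R) * (\<epsilon> * real n / 10) \<le> 3 * (real n / r^2)" by linarith
  have npos: "real n > 0" using n1 by simp
  have r2: "r^2 > 0" using rpos by simp
  have cR: "real (card R) \<le> 30 / (r^2 * \<epsilon>)"
  proof -
    have "real (card R) * (\<epsilon> * real n / 10) * (10 / (\<epsilon> * real n)) \<le> 3 * (real n / r^2) * (10 / (\<epsilon> * real n))"
      using c3 epos npos by (intro mult_right_mono) auto
    thus ?thesis using epos npos r2 by (simp add: field_simps)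
  qed
  have "real (card R) * (3 * real k) \<le> 30 / (r^2 * \<epsilon>) * (3 * (3 * \<delta> * real n))"
  proof (rule mult_mono)
    show "0 \<le> 30 / (r^2 * \<epsilon>)" using r2 epos by simp
  qed (use cR kle in auto)
  also have "\<dots> = 270 * \<delta> * real n / (r^2 * \<epsilon>)" by (simp add: field_simps)
  finally show ?thesis using c1 eq by simp
qed

theorem mainTheorem7:
  "\<exists>C::real. C > 0 \<and>
    (\<forall>(n::nat) (r::real) (\<delta>::real) (\<epsilon>::real) (P::pt set) (\<mu>::pt \<Rightarrow> nat) (L::pt \<Rightarrow> pt list).
      n \<ge> 1 \<longrightarrow> r \<ge> 1 \<longrightarrow> \<delta> > 0 \<longrightarrow> \<delta> * real n \<ge> 1 \<longrightarrow> \<epsilon> > 0 \<longrightarrow>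
      finite P \<longrightarrow> card P \<le> n \<longrightarrow> general_position P \<longrightarrow>
      (\<forall>p\<in>P. real (card (cell P \<mu> p)) \<le> real n / r^2) \<longrightarrow>
      (\<forall>p\<in>P. clockwise_list P p (L p)) \<longrightarrow>
      real (card (Pi_pairs P \<mu> n \<delta> \<epsilon> L)) \<le> C * \<delta> * (real n)^2 / (r^2 * \<epsilon>))"
proof (rule exI[of _ 270], intro conjI allI impI)
  show "(0::real) < 270" by simp
  fix n :: nat and r \<delta> \<epsilon> :: real and P :: "pt set" and \<mu> :: "pt \<Rightarrow> nat" and L :: "pt \<Rightarrow> pt list"
  assume n1: "n \<ge> 1" and r1: "r \<ge> 1" and dpos: "\<delta> > 0" and dn: "\<delta> * real n \<ge> 1" and epos: "\<epsilon> > 0"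
    and fin: "finite P" and cardP: "card P \<le> n" and gp: "general_position P"
    and cellb: "\<forall>p\<in>P. real (card (cell P \<mu> p)) \<le> real n / r^2"
    and cw: "\<forall>p\<in>P. clockwise_list P p (L p)"
  define k where "k = blk \<delta> n"
  have kge: "real k \<ge> 2 * \<delta> * real n" unfolding k_def blk_def by linarith
  have "real k \<ge> 2" using kge dn by linarith
  hence kpos: "k > 0" by simp
  have kle: "real k \<le> 3 * \<delta> * real n"
  proof -
    have "real_of_int \<lceil>2 * \<delta> * real n\<rceil> < 2 * \<delta> * real n + 1" by linarith
    moreover have "2 * \<delta> * real n \<le> real_of_int \<lceil>2 * \<delta> * real n\<rceil>" by (rule le_of_int_ceiling)
    hence "0 \<le> \<lceil>2 * \<delta> * real n\<rceil>" using dn by linarith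
    ultimately show ?thesis unfolding k_def blk_def using dn by simp
  qed
  define B where "B = 270 * \<delta> * real n / (r^2 * \<epsilon>)"
  define S where "S p = {q. in_rich_sector P \<mu> n \<delta> \<epsilon> L p q}" for p
  have Sb: "real (card (S p)) \<le> B" if "p \<in> P" for p
  proof -
    have "distinct (L p)" "set (L p) = P - {p}" using cw that unfolding clockwise_list_def by auto
    from per_point[OF fin this kpos kle n1 epos _ cellb[rule_format, OF that]] r1
    show ?thesis unfolding S_def B_def in_rich_sector_def k_def by simp
  qed
  have Ssub: "S p \<subseteq> P" if "p \<in> P" for p
  proof -
    have "set (L p) = P - {p}" using cw that unfolding clockwise_list_def by auto
    thus ?thesis using sector_sub unfolding S_def in_rich_sector_def by blast
  qed
  have "Pi_pairs P \<mu> n \<delta> \<epsilon> L \<subseteq> (\<lambda>(p,q). {p,q}) ` (SIGMA p:P. S p)"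
  proof
    fix x assume "x \<in> Pi_pairs P \<mu> n \<delta> \<epsilon> L"
    then obtain p q where x: "x = {p,q}" "p \<in> P" "q \<in> P"
      and h: "in_rich_sector P \<mu> n \<delta> \<epsilon> L p q \<or> in_rich_sector P \<mu> n \<delta> \<epsilon> L q p"
      unfolding Pi_pairs_def by auto
    show "x \<in> (\<lambda>(p,q). {p,q}) ` (SIGMA p:P. S p)"
      using h
    proof
      assume "in_rich_sector P \<mu> n \<delta> \<epsilon> L p q"
      hence "(p,q) \<in> (SIGMA p:P. S p)" using x unfolding S_def by auto
      thus ?thesis using x by force
    next
      assume "in_rich_sector P \<mu> n \<delta> \<epsilon> L q p"
      hence "(q,p) \<in> (SIGMA p:P. S p)" using x unfolding S_def by auto
      moreover have "x = (\<lambda>(p,q). {p,q}) (q,p)" using x by auto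
      ultimately show ?thesis by blast
    qed
  qed
  moreover have finS: "finite (SIGMA p:P. S p)"
    using fin Ssub by (meson finite_SigmaI finite_subset)
  ultimately have "card (Pi_pairs P \<mu> n \<delta> \<epsilon> L) \<le> card ((\<lambda>(p,q). {p,q}) ` (SIGMA p:P. S p))"
    by (intro card_mono) auto
  also have "\<dots> \<le> card (SIGMA p:P. S p)" by (rule card_image_le[OF finS])
  also have "\<dots> = (\<Sum>p\<in>P. card (S p))"
    using fin Ssub by (intro card_SigmaI) (auto intro: finite_subset)
  finally have "real (card (Pi_pairs P \<mu> n \<delta> \<epsilon> L)) \<le> (\<Sum>p\<in>P. real (card (S p)))"
    by (metis of_nat_le_iff of_nat_sum)
  also have "\<dots> \<le> (\<Sum>p\<in>P. B)" using Sb by (intro sum_mono) auto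
  also have "\<dots> = real (card P) * B" by simp
  also have "\<dots> \<le> real n * B"
    using cardP dpos epos r1 unfolding B_def by (intro mult_right_mono) auto
  also have "\<dots> = 270 * \<delta> * (real n)^2 / (r^2 * \<epsilon>)" unfolding B_def by (simp add: power2_eq_square)
  finally show "real (card (Pi_pairs P \<mu> n \<delta> \<epsilon> L)) \<le> 270 * \<delta> * (real n)^2 / (r^2 * \<epsilon>)" .
qed

end
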